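(* Let $b,c\in Z^{10}$ with $\sum_i b_i=\sum_i c_i=0$. Let $j\in\{1,3,5,7,9\}$ and let $i_1,i_2,i_3,i_4$ be the remaining four odd indices listed in cyclic order (with $i_5:=i_1$). Assume $t\mid B_j$, $t\mid C_j$, $t\nmid B_{i_l}$, $t\nmid C_{i_l}$ for $l=1,\dots,4$, and $t\nmid B_{i_l}+B_{i_{l+1}}$, $t\nmid C_{i_l}+C_{i_{l+1}}$ for $l=1,2,3,4$. Then $\mathbb{M}(b)\cong\mathbb{M}(c)$ as $B_{5,10}$-modules if and only if $$t\mid B_{i_1}C_{i_2}B_{i_3}C_{i_4}-C_{i_1}B_{i_2}C_{i_3}B_{i_4}.$$
   Context: Let $Z=\mathbb{C}[[t]]$. Let $\Gamma_{10}$ be the quiver with vertices $0,1,\dots,9$ (indices taken mod $10$) on a cycle and arrows $x_i\colon i-1\to i$, $y_i\colon i\to i-1$ for $i=1,\dots,10$. Let $B_{5,10}$ be the completed path algebra of $\Gamma_{10}$ modulo the closed ideal generated by $xy=yx$ and $x^5=y^5$ at every vertex. For $b=(b_1,\dots,b_{10})\in Z^{10}$ with $\sum_i b_i=0$, the $B_{5,10}$-module $\mathbb{M}(b)$ has $V_i=Z\oplus Z$ at every vertex, and for odd $j$: $x_j=\begin{pmatrix} t& b_j\\ 0&1\end{pmatrix}$, $y_j=\begin{pmatrix} 1&-b_j\\0&t\end{pmatrix}$; for even $j$: $x_j=\begin{pmatrix}1&b_j\\0&t\end{pmatrix}$, $y_j=\begin{pmatrix}t&-b_j\\0&1\end{pmatrix}$.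 An isomorphism $\mathbb{M}(b)\to\mathbb{M}(c)$ is a family of invertible $Z$-linear maps $\varphi_i\colon Z^2\to Z^2$ commuting with all $x_i$ and $y_i$. For odd $i$ write $B_i=b_i+b_{i+1}$ and $C_i=c_i+c_{i+1}$ (indices mod $10$). *)

theory Defs
  imports "HOL-Analysis.Analysis" "HOL-Computational_Algebra.Formal_Power_Series"
begin

text \<open>Z = C[[t]] is complex fps; t is fps_X. Z-linear endomorphisms of Z^2 are
  2x2 matrices (rows indexed by the first index), acting on column vectors.\<close>

type_synonym zmat = "complex fps ^ 2 ^ 2"

definition mat2 :: "complex fps \<Rightarrow> complex fps \<Rightarrow> complex fps \<Rightarrow> complex fps \<Rightarrow> zmat" where
  "mat2 a b c d = vector [vector [a, b], vector [c, d]]"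

text \<open>Arrow x_j : vertex (j-1) -> vertex (j mod 10), for j = 1..10.\<close>
definition xmat :: "(nat \<Rightarrow> complex fps) \<Rightarrow> nat \<Rightarrow> zmat" where
  "xmat b j = (if odd j then mat2 fps_X (b j) 0 1 else mat2 1 (b j) 0 fps_X)"

text \<open>Arrow y_j : vertex (j mod 10) -> vertex (j-1), for j = 1..10.\<close>
definition ymat :: "(nat \<Rightarrow> complex fps) \<Rightarrow> nat \<Rightarrow> zmat" where
  "ymat b j = (if odd j then mat2 1 (- b j) 0 fps_X else mat2 fps_X (- b j) 0 1)"

definition M_iso :: "(nat \<Rightarrow> complex fps) \<Rightarrow> (nat \<Rightarrow> complex fps) \<Rightarrow> bool" where
  "M_iso b c \<longleftrightarrow> (\<exists>\<phi> :: nat \<Rightarrow> zmat.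
      (\<forall>i<10. invertible (\<phi> i)) \<and>
      (\<forall>j\<in>{1..10}. \<phi> (j mod 10) ** xmat b j = xmat c j ** \<phi> (j - 1) \<and>
                    \<phi> (j - 1) ** ymat b j = ymat c j ** \<phi> (j mod 10)))"

definition Bsum :: "(nat \<Rightarrow> complex fps) \<Rightarrow> nat \<Rightarrow> complex fps" where
  "Bsum b i = b i + b (i + 1)"

text \<open>i_l for l \<ge> 1: the remaining odd indices after j in cyclic order, periodic in l with
  period 4, so that i_5 = i_1.\<close>
definition oidx :: "nat \<Rightarrow> nat \<Rightarrow> nat" where
  "oidx j l = ((j - 1 + 2 * ((l - 1) mod 4 + 1)) mod 10) + 1"

end

theory Submission imports Defs begin

lemma mat2_nth[simp]:
  "mat2 a b c d $ 1 $ 1 = a" "mat2 a b c d $ 1 $ 2 = b"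
  "mat2 a b c d $ 2 $ 1 = c" "mat2 a b c d $ 2 $ 2 = d"
  by (simp_all add: mat2_def)

lemma mat2_eq_iff: "mat2 a b c d = mat2 e f g h \<longleftrightarrow> a = e \<and> b = f \<and> c = g \<and> d = h"
  by (auto simp: mat2_def vec_eq_iff forall_2)

lemma mat2_eta: "(A::zmat) = mat2 (A$1$1) (A$1$2) (A$2$1) (A$2$2)"
  by (simp add: vec_eq_iff forall_2)

lemma mat2_mult: "mat2 a b c d ** mat2 e f g h = mat2 (a*e+b*g) (a*f+b*h) (c*e+d*g) (c*f+d*h)"
  by (simp add: vec_eq_iff forall_2 matrix_matrix_mult_def sum_2)

lemma mat2_one: "(mat 1 :: zmat) = mat2 1 0 0 1"
  by (simp add: vec_eq_iff forall_2 mat_def)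

lemma det_mat2: "det (mat2 a b c d) = a*d - b*c"
  by (simp add: det_2)

lemma X_dvd_iff: "fps_X dvd (f::complex fps) \<longleftrightarrow> fps_nth f 0 = 0"
proof
  assume "fps_X dvd f" then obtain g where "f = fps_X * g" by (auto elim: dvdE)
  then show "fps_nth f 0 = 0" by simp
next
  assume h: "fps_nth f 0 = 0"
  have "f = fps_X * fps_shift 1 f"
    by (rule fps_ext) (use h in \<open>auto simp: fps_X_mult_nth\<close>)
  then show "fps_X dvd f" by (metis dvd_triv_left)
qed

lemma invertible_mat2:
  assumes "a*d - b*c = fps_const k" "k \<noteq> 0"
  shows "invertible (mat2 a b c d)"
proof -
  let ?i = "fps_const (1/k)"
  have ki: "fps_const k * ?i = 1" using assms(2) by (simp flip: fps_const_mult)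
  have e: "a*d*?i - b*c*?i = 1" using ki assms(1) by (metis left_diff_distrib mult.commute)
  have 1: "mat2 a b c d ** mat2 (d*?i) (-b*?i) (-c*?i) (a*?i) = mat 1"
    unfolding mat2_mult mat2_one mat2_eq_iff
  proof (intro conjI)
    show "a * (d * ?i) + b * (- c * ?i) = 1" using e by algebra
    show "c * (d * ?i) + d * (- c * ?i) = 0" by (simp add: algebra_simps)
    show "a * (- b * ?i) + b * (a * ?i) = 0" by (simp add: algebra_simps)
    show "c * (- b * ?i) + d * (a * ?i) = 1" using e by algebra
  qed
  have 2: "mat2 (d*?i) (-b*?i) (-c*?i) (a*?i) ** mat2 a b c d = mat 1"
    unfolding mat2_mult mat2_one mat2_eq_iff
  proof (intro conjI)
    show "d * ?i * a + - b * ?i * c = 1" using e by algebra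
    show "d * ?i * b + - b * ?i * d = 0" by (simp add: algebra_simps)
    show "- c * ?i * a + a * ?i * c = 0" by (simp add: algebra_simps)
    show "- c * ?i * b + a * ?i * d = 1" using e by algebra
  qed
  from 1 2 show ?thesis unfolding invertible_def by blast
qed


definition T :: "(nat \<Rightarrow> complex fps) \<Rightarrow> nat \<Rightarrow> complex fps" where
  "T b n = (\<Sum>i\<in>{1..n}. b i)"

lemma T_0[simp]: "T b 0 = 0" by (simp add: T_def)
lemma T_Suc: "T b (Suc n) = T b n + b (Suc n)" by (simp add: T_def)

definition QQ where "QQ b c P R S n = T c n * S - T b n * (P + T c n * R)"

definition phiC :: "(nat \<Rightarrow> complex fps) \<Rightarrow> (nat \<Rightarrow> complex fps) \<Rightarrow> complex fps \<Rightarrow> complex fps \<Rightarrow> complex fps \<Rightarrow> nat \<Rightarrow> zmat" where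
  "phiC b c P R S n = (if odd n then mat2 (P + T c n * R) (QQ b c P R S n) R (S - R * T b n)
     else mat2 (P + T c n * R) (fps_shift 1 (QQ b c P R S n)) (fps_X * R) (S - R * T b n))"

lemma step_odd_x:
  fixes P R S tb tc \<beta> \<gamma> E :: "complex fps"
  assumes E: "fps_X * E = tc*S - tb*(P+tc*R)"
  shows "mat2 (P+(tc+\<gamma>)*R) ((tc+\<gamma>)*S - (tb+\<beta>)*(P+(tc+\<gamma>)*R)) R (S - R*(tb+\<beta>)) ** mat2 fps_X \<beta> 0 1
         = mat2 fps_X \<gamma> 0 1 ** mat2 (P+tc*R) E (fps_X*R) (S - R*tb)"
proof -
  have E': "E * fps_X = fps_X * E" by (simp add: mult.commute)
  show ?thesis unfolding mat2_mult mat2_eq_iff E' E by (simp add: algebra_simps)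
qed

lemma step_odd_y:
  fixes P R S tb tc \<beta> \<gamma> E :: "complex fps"
  assumes E: "fps_X * E = tc*S - tb*(P+tc*R)"
  shows "mat2 (P+tc*R) E (fps_X*R) (S - R*tb) ** mat2 1 (-\<beta>) 0 fps_X
         = mat2 1 (-\<gamma>) 0 fps_X ** mat2 (P+(tc+\<gamma>)*R) ((tc+\<gamma>)*S - (tb+\<beta>)*(P+(tc+\<gamma>)*R)) R (S - R*(tb+\<beta>))"
proof -
  have E': "E * fps_X = fps_X * E" by (simp add: mult.commute)
  show ?thesis unfolding mat2_mult mat2_eq_iff E' E by (simp add: algebra_simps)
qed

lemmas step_odd = step_odd_x step_odd_y

lemma step_even_x:
  fixes P R S tb tc \<beta> \<gamma> E :: "complex fps"
  assumes E: "fps_X * E = (tc+\<gamma>)*S - (tb+\<beta>)*(P+(tc+\<gamma>)*R)"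
  shows "mat2 (P+(tc+\<gamma>)*R) E (fps_X*R) (S - R*(tb+\<beta>)) ** mat2 1 \<beta> 0 fps_X
         = mat2 1 \<gamma> 0 fps_X ** mat2 (P+tc*R) (tc*S - tb*(P+tc*R)) R (S - R*tb)"
proof -
  have E': "E * fps_X = fps_X * E" by (simp add: mult.commute)
  show ?thesis unfolding mat2_mult mat2_eq_iff E' E by (simp add: algebra_simps)
qed

lemma step_even_y:
  fixes P R S tb tc \<beta> \<gamma> E :: "complex fps"
  assumes E: "fps_X * E = (tc+\<gamma>)*S - (tb+\<beta>)*(P+(tc+\<gamma>)*R)"
  shows "mat2 (P+tc*R) (tc*S - tb*(P+tc*R)) R (S - R*tb) ** mat2 fps_X (-\<beta>) 0 1
         = mat2 fps_X (-\<gamma>) 0 1 ** mat2 (P+(tc+\<gamma>)*R) E (fps_X*R) (S - R*(tb+\<beta>))"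
proof -
  have E': "E * fps_X = fps_X * E" by (simp add: mult.commute)
  show ?thesis unfolding mat2_mult mat2_eq_iff E' E by (simp add: algebra_simps)
qed

lemmas step_even = step_even_x step_even_y


lemma X_shift: "fps_nth f 0 = 0 \<Longrightarrow> fps_X * fps_shift 1 f = (f::complex fps)"
  by (rule fps_ext) (auto simp: fps_X_mult_nth)

lemma step_all:
  fixes b c :: "nat \<Rightarrow> complex fps" and P R S :: "complex fps"
  assumes Q: "\<And>m. m \<le> 10 \<Longrightarrow> even m \<Longrightarrow> fps_X * fps_shift 1 (QQ b c P R S m) = QQ b c P R S m"
    and n: "n < 10"
  shows "phiC b c P R S (Suc n) ** xmat b (Suc n) = xmat c (Suc n) ** phiC b c P R S n \<and>
         phiC b c P R S n ** ymat b (Suc n) = ymat c (Suc n) ** phiC b c P R S (Suc n)"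
proof (cases "even n")
  case True
  have E: "fps_X * fps_shift 1 (QQ b c P R S n) = T c n * S - T b n * (P + T c n * R)"
    using Q[of n] True n by (simp add: QQ_def)
  have 1: "phiC b c P R S n = mat2 (P + T c n * R) (fps_shift 1 (QQ b c P R S n)) (fps_X * R) (S - R * T b n)"
    using True by (simp add: phiC_def)
  have 2: "phiC b c P R S (Suc n) = mat2 (P + (T c n + c (Suc n)) * R)
     ((T c n + c (Suc n)) * S - (T b n + b (Suc n)) * (P + (T c n + c (Suc n)) * R)) R (S - R * (T b n + b (Suc n)))"
    using True by (simp add: phiC_def QQ_def T_Suc)
  have 3: "xmat b (Suc n) = mat2 fps_X (b (Suc n)) 0 1" "xmat c (Suc n) = mat2 fps_X (c (Suc n)) 0 1"
    "ymat b (Suc n) = mat2 1 (- b (Suc n)) 0 fps_X" "ymat c (Suc n) = mat2 1 (- c (Suc n)) 0 fps_X"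
    using True by (simp_all add: xmat_def ymat_def)
  show ?thesis unfolding 1 2 3
    using step_odd[OF E, where \<gamma>="c (Suc n)" and \<beta>="b (Suc n)"] by blast
next
  case False
  have E: "fps_X * fps_shift 1 (QQ b c P R S (Suc n)) = (T c n + c (Suc n)) * S - (T b n + b (Suc n)) * (P + (T c n + c (Suc n)) * R)"
    using Q[of "Suc n"] False n by (simp add: QQ_def T_Suc)
  have 1: "phiC b c P R S n = mat2 (P + T c n * R) (T c n * S - T b n * (P + T c n * R)) R (S - R * T b n)"
    using False by (simp add: phiC_def QQ_def)
  have 2: "phiC b c P R S (Suc n) = mat2 (P + (T c n + c (Suc n)) * R) (fps_shift 1 (QQ b c P R S (Suc n)))
      (fps_X * R) (S - R * (T b n + b (Suc n)))"
    using False by (simp add: phiC_def T_Suc)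
  have 3: "xmat b (Suc n) = mat2 1 (b (Suc n)) 0 fps_X" "xmat c (Suc n) = mat2 1 (c (Suc n)) 0 fps_X"
    "ymat b (Suc n) = mat2 fps_X (- b (Suc n)) 0 1" "ymat c (Suc n) = mat2 fps_X (- c (Suc n)) 0 1"
    using False by (simp_all add: xmat_def ymat_def)
  show ?thesis unfolding 1 2 3
    using step_even[OF E] by blast
qed

lemma det_phiC:
  fixes b c :: "nat \<Rightarrow> complex fps" and P R S :: "complex fps"
  assumes Q: "\<And>m. m \<le> 10 \<Longrightarrow> even m \<Longrightarrow> fps_X * fps_shift 1 (QQ b c P R S m) = QQ b c P R S m"
    and n: "n \<le> 10"
  shows "(P + T c n * R) * (S - R * T b n) - (phiC b c P R S n $ 1 $ 2) * (phiC b c P R S n $ 2 $ 1) = P * S"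
proof (cases "even n")
  case True
  have E: "fps_shift 1 (QQ b c P R S n) * fps_X = T c n * S - T b n * (P + T c n * R)"
    using Q[of n] True n by (simp add: QQ_def mult.commute)
  have "fps_shift 1 (QQ b c P R S n) * (fps_X * R) = (fps_shift 1 (QQ b c P R S n) * fps_X) * R"
    by (simp only: mult.assoc)
  also have "\<dots> = (T c n * S - T b n * (P + T c n * R)) * R" by (simp only: E)
  finally have E2: "fps_shift 1 (QQ b c P R S n) * (fps_X * R) = (T c n * S - T b n * (P + T c n * R)) * R" .
  have "(P + T c n * R) * (S - R * T b n) - fps_shift 1 (QQ b c P R S n) * (fps_X * R) = P * S"
    unfolding E2 by (simp add: algebra_simps)
  then show ?thesis using True by (simp add: phiC_def)
next
  case False
  then show ?thesis by (simp add: phiC_def QQ_def algebra_simps)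
qed

lemma construct:
  fixes b c :: "nat \<Rightarrow> complex fps" and p r s :: complex
  assumes Tb: "T b 10 = 0" and Tc: "T c 10 = 0" and ps: "p * s \<noteq> 0"
    and cond: "\<And>k. k \<in> {1..4} \<Longrightarrow> fps_nth (T c (2*k)) 0 * s = fps_nth (T b (2*k)) 0 * (p + fps_nth (T c (2*k)) 0 * r)"
  shows "M_iso b c"
proof -
  define P where "P = fps_const p"
  define R where "R = fps_const r"
  define S where "S = fps_const s"
  have Q: "fps_X * fps_shift 1 (QQ b c P R S m) = QQ b c P R S m" if m: "m \<le> 10" "even m" for m
  proof (rule X_shift)
    have "m = 0 \<or> m = 10 \<or> (\<exists>k\<in>{1..4}. m = 2*k)"
      using m by (auto elim!: evenE)
    then show "fps_nth (QQ b c P R S m) 0 = 0"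
    proof (elim disjE)
      assume "\<exists>k\<in>{1..4}. m = 2*k"
      then obtain k where k: "k \<in> {1..4}" "m = 2*k" by blast
      show ?thesis using cond[OF k(1)] k(2) by (simp add: QQ_def P_def R_def S_def)
    next
      assume "m = 0" then show ?thesis by (simp add: QQ_def)
    next
      assume "m = 10" then show ?thesis by (simp add: QQ_def Tb Tc)
    qed
  qed
  define ph where "ph = phiC b c P R S"
  have phi10: "ph 10 = ph 0" using Tb Tc by (simp add: ph_def phiC_def QQ_def)
  have inv: "invertible (ph i)" if "i < 10" for i
  proof -
    have d: "(P + T c i * R) * (S - R * T b i) - (phiC b c P R S i $ 1 $ 2) * (phiC b c P R S i $ 2 $ 1) = fps_const (p * s)"
      using det_phiC[OF Q, of i] that by (simp add: ph_def P_def S_def fps_const_mult)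
    have "ph i = mat2 (P + T c i * R) (phiC b c P R S i $ 1 $ 2) (phiC b c P R S i $ 2 $ 1) (S - R * T b i)"
      by (simp add: ph_def phiC_def)
    then show ?thesis using invertible_mat2[OF d ps] by simp
  qed
  have eqs: "ph (j mod 10) ** xmat b j = xmat c j ** ph (j - 1) \<and>
             ph (j - 1) ** ymat b j = ymat c j ** ph (j mod 10)" if j: "j \<in> {1..10}" for j
  proof -
    obtain n where n: "j = Suc n" "n < 10" using j by (cases j) auto
    have "ph (j mod 10) = ph j" using phi10 n by (cases "j = 10") auto
    then show ?thesis using step_all[OF Q n(2)] n by (simp add: ph_def)
  qed
  show ?thesis unfolding M_iso_def using inv eqs by blast
qed


definition Mf :: "(nat \<Rightarrow> complex fps) \<Rightarrow> nat \<Rightarrow> zmat" where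
  "Mf b n = (if odd n then mat2 fps_X (T b n) 0 1 else mat2 fps_X (T b n) 0 fps_X)"

abbreviation "DX \<equiv> mat2 fps_X 0 0 fps_X"

lemma DX_comm: "DX ** (A::zmat) = A ** DX"
  by (subst (1 2) mat2_eta[of A]) (simp add: mat2_mult mult.commute)

lemma DX_cancel:
  assumes h: "(A::zmat) ** DX = B ** DX" shows "A = B"
proof -
  have "mat2 (A$1$1) (A$1$2) (A$2$1) (A$2$2) ** DX = mat2 (B$1$1) (B$1$2) (B$2$1) (B$2$2) ** DX"
    using h by (simp only: mat2_eta[symmetric])
  then have "A$1$1 = B$1$1 \<and> A$1$2 = B$1$2 \<and> A$2$1 = B$2$1 \<and> A$2$2 = B$2$2"
    unfolding mat2_mult mat2_eq_iff by simp
  then show ?thesis by (simp add: vec_eq_iff forall_2)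
qed

lemma Mf_step_even: "even (Suc m) \<Longrightarrow> xmat b (Suc m) ** Mf b m = Mf b (Suc m)"
  by (simp add: Mf_def xmat_def mat2_mult T_Suc algebra_simps)

lemma Mf_step_odd: "odd (Suc m) \<Longrightarrow> xmat b (Suc m) ** Mf b m = Mf b (Suc m) ** DX"
  by (simp add: Mf_def xmat_def mat2_mult T_Suc algebra_simps)

lemma chain:
  fixes \<phi> :: "nat \<Rightarrow> zmat"
  assumes eq: "\<And>j. j \<in> {1..n} \<Longrightarrow> \<phi> j ** xmat b j = xmat c j ** \<phi> (j - 1)"
  shows "\<phi> n ** Mf b n = Mf c n ** \<phi> 0"
  using eq
proof (induction n)
  case 0
  show ?case using DX_comm[of "\<phi> 0"] by (simp add: Mf_def)
next
  case (Suc m)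
  have IH: "\<phi> m ** Mf b m = Mf c m ** \<phi> 0" using Suc by auto
  have e: "\<phi> (Suc m) ** xmat b (Suc m) = xmat c (Suc m) ** \<phi> m" using Suc.prems[of "Suc m"] by simp
  show ?case
  proof (cases "even (Suc m)")
    case True
    have "\<phi> (Suc m) ** Mf b (Suc m) = (\<phi> (Suc m) ** xmat b (Suc m)) ** Mf b m"
      by (simp add: Mf_step_even[OF True, symmetric] matrix_mul_assoc)
    also have "\<dots> = xmat c (Suc m) ** (\<phi> m ** Mf b m)" by (simp add: e matrix_mul_assoc)
    also have "\<dots> = Mf c (Suc m) ** \<phi> 0"
      by (simp add: IH matrix_mul_assoc Mf_step_even[OF True])
    finally show ?thesis .
  next
    case False
    have "(\<phi> (Suc m) ** Mf b (Suc m)) ** DX = (\<phi> (Suc m) ** xmat b (Suc m)) ** Mf b m"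
      using Mf_step_odd[of m b] False by (simp add: matrix_mul_assoc[symmetric])
    also have "\<dots> = xmat c (Suc m) ** (\<phi> m ** Mf b m)" by (simp add: e matrix_mul_assoc)
    also have "\<dots> = xmat c (Suc m) ** (Mf c m ** \<phi> 0)" by (simp only: IH)
    also have "\<dots> = (xmat c (Suc m) ** Mf c m) ** \<phi> 0" by (simp only: matrix_mul_assoc)
    also have "\<dots> = (Mf c (Suc m) ** DX) ** \<phi> 0" using Mf_step_odd[of m c] False by simp
    also have "\<dots> = Mf c (Suc m) ** (DX ** \<phi> 0)" by (simp only: matrix_mul_assoc)
    also have "\<dots> = Mf c (Suc m) ** (\<phi> 0 ** DX)" by (simp only: DX_comm)
    also have "\<dots> = (Mf c (Suc m) ** \<phi> 0) ** DX" by (simp only: matrix_mul_assoc)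
    finally show ?thesis by (rule DX_cancel)
  qed
qed


lemma necessary:
  assumes "M_iso b c"
  shows "\<exists>p r s :: complex. p * s \<noteq> 0 \<and> (\<forall>k\<in>{1..4}.
     fps_nth (T c (2*k)) 0 * s = fps_nth (T b (2*k)) 0 * (p + fps_nth (T c (2*k)) 0 * r))"
proof -
  obtain ph where inv: "\<forall>i<10. invertible (ph i)"
    and eqs: "\<forall>j\<in>{1..10}. ph (j mod 10) ** xmat b j = xmat c j ** ph (j - 1) \<and>
                    ph (j - 1) ** ymat b j = ymat c j ** ph (j mod 10)"
    using assms unfolding M_iso_def by blast
  have ch: "ph n ** Mf b n = Mf c n ** ph 0" if "n \<le> 8" for n
  proof (rule chain)
    fix j assume "j \<in> {1..n}"
    then have "j \<in> {1..10}" "j mod 10 = j" using that by auto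
    then show "ph j ** xmat b j = xmat c j ** ph (j - 1)" using eqs by metis
  qed
  define a where "a = ph 0 $ 1 $ 1"
  define q where "q = ph 0 $ 1 $ 2"
  define rr where "rr = ph 0 $ 2 $ 1"
  define d where "d = ph 0 $ 2 $ 2"
  have phi0: "ph 0 = mat2 a q rr d" unfolding a_def q_def rr_def d_def by (rule mat2_eta)
  have "ph 1 ** Mf b 1 = Mf c 1 ** ph 0" using ch[of 1] by simp
  then have "ph 1 $ 2 $ 1 * fps_X = rr"
    by (subst (asm) mat2_eta[of "ph 1"]) (simp add: phi0 Mf_def mat2_mult mat2_eq_iff)
  then have r': "rr = fps_X * (ph 1 $ 2 $ 1)" by (simp add: mult.commute)
  define r1 where "r1 = ph 1 $ 2 $ 1"
  have key: "fps_nth (T c (2*k)) 0 * fps_nth d 0 = fps_nth (T b (2*k)) 0 * (fps_nth a 0 + fps_nth (T c (2*k)) 0 * fps_nth r1 0)"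
    if k: "k \<in> {1..4}" for k
  proof -
    let ?n = "2*k"
    have "ph ?n ** Mf b ?n = Mf c ?n ** ph 0" using ch[of ?n] k by simp
    then have "ph ?n $ 1 $ 1 * fps_X = fps_X * a + T c ?n * rr"
      and e2: "ph ?n $ 1 $ 1 * T b ?n + ph ?n $ 1 $ 2 * fps_X = fps_X * q + T c ?n * d"
      by (subst (asm) mat2_eta[of "ph ?n"], simp add: phi0 Mf_def mat2_mult mat2_eq_iff)+
    then have "fps_X * ph ?n $ 1 $ 1 = fps_X * (a + T c ?n * r1)"
      by (simp add: r' r1_def algebra_simps)
    then have A: "ph ?n $ 1 $ 1 = a + T c ?n * r1" by simp
    have "T c ?n * d - (a + T c ?n * r1) * T b ?n = fps_X * (ph ?n $ 1 $ 2 - q)"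
      using e2 unfolding A by (simp add: algebra_simps)
    then have "fps_nth (T c ?n * d - (a + T c ?n * r1) * T b ?n) 0 = 0" by simp
    then show ?thesis by (simp add: algebra_simps)
  qed
  have "invertible (ph 0)" using inv by simp
  then obtain B where "ph 0 ** B = mat 1" unfolding invertible_def by blast
  then have "det (ph 0) * det B = 1" by (metis det_mul det_I)
  then have "fps_nth (det (ph 0)) 0 \<noteq> 0"
    by (metis fps_mult_nth_0 fps_one_nth mult_zero_left zero_neq_one)
  then have ps: "fps_nth a 0 * fps_nth d 0 \<noteq> 0"
    by (simp add: phi0 det_mat2 r')
  show ?thesis using key ps by blast
qed


definition Cnd :: "complex \<Rightarrow> complex \<Rightarrow> complex \<Rightarrow> complex \<Rightarrow> complex \<Rightarrow> bool" where
  "Cnd p r s u v \<longleftrightarrow> v * s = u * (p + v * r)"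

definition W :: "complex \<Rightarrow> complex \<Rightarrow> complex \<Rightarrow> complex \<Rightarrow> complex \<Rightarrow> complex \<Rightarrow> complex" where
  "W x y z x' y' z' = x * (y' - x') * (z - y) * (- z') - x' * (y - x) * (z' - y') * (- z)"

lemma Cnd_0[simp]: "Cnd p r s 0 0" by (simp add: Cnd_def)

lemma Cnd_m:
  assumes "p * s \<noteq> 0" "Cnd p r s u v"
  shows "s - u * r \<noteq> 0"
proof
  assume h: "s - u * r = 0"
  have "v * (s - u * r) = p * u" using assms(2) by (simp add: Cnd_def algebra_simps)
  then have "u = 0" using h assms(1) by simp
  then show False using h assms(1) by simp
qed

lemma Cnd_diff:
  assumes "Cnd p r s u v" "Cnd p r s u2 v2"
  shows "(v2 - v) * (s - u * r) * (s - u2 * r) = p * s * (u2 - u)"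
proof -
  have 1: "v * (s - u * r) = p * u" and 2: "v2 * (s - u2 * r) = p * u2"
    using assms by (simp_all add: Cnd_def algebra_simps)
  have "(v2 - v) * (s - u * r) * (s - u2 * r) = (v2 * (s - u2 * r)) * (s - u * r) - (v * (s - u * r)) * (s - u2 * r)"
    by (simp add: algebra_simps)
  also have "\<dots> = p * s * (u2 - u)" unfolding 1 2 by (simp add: algebra_simps)
  finally show ?thesis .
qed

lemma nec_W:
  assumes ps: "p * s \<noteq> 0" and cx: "Cnd p r s x x'" and cy: "Cnd p r s y y'" and cz: "Cnd p r s z z'"
  shows "W x y z x' y' z' = 0"
proof -
  have c0: "Cnd p r s 0 0" by simp
  have F1: "x' * s * (s - x * r) = p * s * x" using Cnd_diff[OF c0 cx] by simp
  have F2: "(y' - x') * (s - x * r) * (s - y * r) = p * s * (y - x)" using Cnd_diff[OF cx cy] .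
  have F3: "(z' - y') * (s - y * r) * (s - z * r) = p * s * (z - y)" using Cnd_diff[OF cy cz] .
  have F4: "(0 - z') * (s - z * r) * s = p * s * (0 - z)" using Cnd_diff[OF cz c0] by simp
  have "W x y z x' y' z' * (s * (s - x * r) * (s - y * r) * (s - z * r))
      = x * (z - y) * ((y' - x') * (s - x * r) * (s - y * r)) * ((0 - z') * (s - z * r) * s)
      - (y - x) * (0 - z) * (x' * s * (s - x * r)) * ((z' - y') * (s - y * r) * (s - z * r))"
    by (simp add: W_def algebra_simps)
  also have "\<dots> = 0" unfolding F1 F2 F3 F4 by (simp add: algebra_simps)
  finally have "W x y z x' y' z' * (s * (s - x * r) * (s - y * r) * (s - z * r)) = 0" .
  moreover have "s \<noteq> 0" using ps by simp
  ultimately show ?thesis using Cnd_m[OF ps cx] Cnd_m[OF ps cy] Cnd_m[OF ps cz] by simp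
qed

lemma suf_W:
  assumes "x \<noteq> 0" "y \<noteq> 0" "x \<noteq> y" "x' \<noteq> 0" "y' \<noteq> 0" "x' \<noteq> y'" and w: "W x y z x' y' z' = 0"
  shows "\<exists>p r s. p * s \<noteq> 0 \<and> Cnd p r s x x' \<and> Cnd p r s y y' \<and> Cnd p r s z z'"
proof (intro exI conjI)
  let ?p = "x' * y' * (y - x)" and ?s = "(y' - x') * x * y" and ?r = "y' * x - x' * y"
  show "?p * ?s \<noteq> 0" using assms by simp
  show "Cnd ?p ?r ?s x x'" by (simp add: Cnd_def algebra_simps)
  show "Cnd ?p ?r ?s y y'" by (simp add: Cnd_def algebra_simps)
  have "z' * ?s - z * (?p + z' * ?r) = W x y z x' y' z'" by (simp add: W_def algebra_simps)
  then show "Cnd ?p ?r ?s z z'" using w by (simp add: Cnd_def)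
qed

lemma equiv3:
  assumes "x \<noteq> 0" "y \<noteq> 0" "x \<noteq> y" "x' \<noteq> 0" "y' \<noteq> 0" "x' \<noteq> y'"
  shows "(\<exists>p r s. p * s \<noteq> 0 \<and> Cnd p r s x x' \<and> Cnd p r s y y' \<and> Cnd p r s z z') \<longleftrightarrow> W x y z x' y' z' = 0"
  using suf_W[OF assms] nec_W by blast


lemma T_vals:
  "T b 2 = Bsum b 1" "T b 4 = Bsum b 1 + Bsum b 3" "T b 6 = Bsum b 1 + Bsum b 3 + Bsum b 5"
  "T b 8 = Bsum b 1 + Bsum b 3 + Bsum b 5 + Bsum b 7"
  "T b 10 = Bsum b 1 + Bsum b 3 + Bsum b 5 + Bsum b 7 + Bsum b 9"
  by (simp_all add: eval_nat_numeral T_Suc Bsum_def algebra_simps)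

lemma T10: "T b 10 = (\<Sum>i\<in>{1..10}. b i)" by (simp add: T_def)

lemma iso_char:
  assumes "(\<Sum>i\<in>{1..10}. b i) = 0" "(\<Sum>i\<in>{1..10}. c i) = 0"
  shows "M_iso b c \<longleftrightarrow> (\<exists>p r s. p * s \<noteq> 0 \<and>
     Cnd p r s (fps_nth (Bsum b 1) 0) (fps_nth (Bsum c 1) 0) \<and>
     Cnd p r s (fps_nth (Bsum b 1) 0 + fps_nth (Bsum b 3) 0) (fps_nth (Bsum c 1) 0 + fps_nth (Bsum c 3) 0) \<and>
     Cnd p r s (fps_nth (Bsum b 1) 0 + fps_nth (Bsum b 3) 0 + fps_nth (Bsum b 5) 0)
               (fps_nth (Bsum c 1) 0 + fps_nth (Bsum c 3) 0 + fps_nth (Bsum c 5) 0) \<and>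
     Cnd p r s (fps_nth (Bsum b 1) 0 + fps_nth (Bsum b 3) 0 + fps_nth (Bsum b 5) 0 + fps_nth (Bsum b 7) 0)
               (fps_nth (Bsum c 1) 0 + fps_nth (Bsum c 3) 0 + fps_nth (Bsum c 5) 0 + fps_nth (Bsum c 7) 0))"
    (is "_ \<longleftrightarrow> ?R")
proof -
  have k4: "{1..4::nat} = {1,2,3,4}" by auto
  have eqv: "(\<forall>k\<in>{1..4}. fps_nth (T c (2*k)) 0 * s = fps_nth (T b (2*k)) 0 * (p + fps_nth (T c (2*k)) 0 * r))
     \<longleftrightarrow> Cnd p r s (fps_nth (Bsum b 1) 0) (fps_nth (Bsum c 1) 0) \<and>
     Cnd p r s (fps_nth (Bsum b 1) 0 + fps_nth (Bsum b 3) 0) (fps_nth (Bsum c 1) 0 + fps_nth (Bsum c 3) 0) \<and>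
     Cnd p r s (fps_nth (Bsum b 1) 0 + fps_nth (Bsum b 3) 0 + fps_nth (Bsum b 5) 0)
               (fps_nth (Bsum c 1) 0 + fps_nth (Bsum c 3) 0 + fps_nth (Bsum c 5) 0) \<and>
     Cnd p r s (fps_nth (Bsum b 1) 0 + fps_nth (Bsum b 3) 0 + fps_nth (Bsum b 5) 0 + fps_nth (Bsum b 7) 0)
               (fps_nth (Bsum c 1) 0 + fps_nth (Bsum c 3) 0 + fps_nth (Bsum c 5) 0 + fps_nth (Bsum c 7) 0)"
    for p r s
    unfolding k4 by (simp add: T_vals Cnd_def)
  have Tb: "T b 10 = 0" and Tc: "T c 10 = 0" using assms by (simp_all add: T10)
  show ?thesis
  proof
    assume "M_iso b c"
    then show ?R using necessary[of b c] eqv by blast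
  next
    assume ?R
    then obtain p r s where "p * s \<noteq> 0" "\<forall>k\<in>{1..4}. fps_nth (T c (2*k)) 0 * s = fps_nth (T b (2*k)) 0 * (p + fps_nth (T c (2*k)) 0 * r)"
      using eqv by blast
    then show "M_iso b c" using construct[OF Tb Tc] by blast
  qed
qed


abbreviation "CC p r s a1 a3 a5 a7 c1 c3 c5 c7 \<equiv> p * s \<noteq> 0 \<and> Cnd p r s a1 c1 \<and> Cnd p r s (a1 + a3) (c1 + c3) \<and>
   Cnd p r s (a1 + a3 + a5) (c1 + c3 + c5) \<and> Cnd p r s (a1 + a3 + a5 + a7) (c1 + c3 + c5 + c7)"

lemma case9:
  fixes a1 a3 a5 a7 a9 c1 c3 c5 c7 c9 :: complex
  assumes sa: "a1 + a3 + a5 + a7 + a9 = 0" and sc: "c1 + c3 + c5 + c7 + c9 = 0" and "a9 = 0" "c9 = 0"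
    and "a1 \<noteq> 0" "a3 \<noteq> 0" "a1 + a3 \<noteq> 0" "c1 \<noteq> 0" "c3 \<noteq> 0" "c1 + c3 \<noteq> 0"
  shows "(\<exists>p r s. CC p r s a1 a3 a5 a7 c1 c3 c5 c7) \<longleftrightarrow> a1 * c3 * a5 * c7 - c1 * a3 * c5 * a7 = 0"
proof -
  have a7: "a7 = - (a1 + a3 + a5)" and c7: "c7 = - (c1 + c3 + c5)" using assms by (simp_all add: algebra_simps eq_neg_iff_add_eq_0)
  have w: "W a1 (a1 + a3) (a1 + a3 + a5) c1 (c1 + c3) (c1 + c3 + c5) = a1 * c3 * a5 * c7 - c1 * a3 * c5 * a7"
    unfolding a7 c7 W_def by (simp add: algebra_simps)
  have "(\<exists>p r s. CC p r s a1 a3 a5 a7 c1 c3 c5 c7) \<longleftrightarrow> (\<exists>p r s. p * s \<noteq> 0 \<and> Cnd p r s a1 c1 \<and> Cnd p r s (a1 + a3) (c1 + c3) \<and>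
   Cnd p r s (a1 + a3 + a5) (c1 + c3 + c5))" unfolding a7 c7 by simp
  also have "\<dots> \<longleftrightarrow> W a1 (a1 + a3) (a1 + a3 + a5) c1 (c1 + c3) (c1 + c3 + c5) = 0"
    by (rule equiv3) (use assms in auto)
  finally show ?thesis unfolding w .
qed

lemma case7:
  fixes a1 a3 a5 a7 a9 c1 c3 c5 c7 c9 :: complex
  assumes sa: "a1 + a3 + a5 + a7 + a9 = 0" and sc: "c1 + c3 + c5 + c7 + c9 = 0" and a7: "a7 = 0" and c7: "c7 = 0"
    and "a1 \<noteq> 0" "a3 \<noteq> 0" "a1 + a3 \<noteq> 0" "c1 \<noteq> 0" "c3 \<noteq> 0" "c1 + c3 \<noteq> 0"
  shows "(\<exists>p r s. CC p r s a1 a3 a5 a7 c1 c3 c5 c7) \<longleftrightarrow> a9 * c1 * a3 * c5 - c9 * a1 * c3 * a5 = 0"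
proof -
  have a9: "a9 = - (a1 + a3 + a5)" and c9: "c9 = - (c1 + c3 + c5)" using assms by (simp_all add: algebra_simps eq_neg_iff_add_eq_0)
  have w: "W a1 (a1 + a3) (a1 + a3 + a5) c1 (c1 + c3) (c1 + c3 + c5) = - (a9 * c1 * a3 * c5 - c9 * a1 * c3 * a5)"
    unfolding a9 c9 W_def by (simp add: algebra_simps)
  have "(\<exists>p r s. CC p r s a1 a3 a5 a7 c1 c3 c5 c7) \<longleftrightarrow> (\<exists>p r s. p * s \<noteq> 0 \<and> Cnd p r s a1 c1 \<and> Cnd p r s (a1 + a3) (c1 + c3) \<and>
   Cnd p r s (a1 + a3 + a5) (c1 + c3 + c5))" unfolding a7 c7 by simp
  also have "\<dots> \<longleftrightarrow> W a1 (a1 + a3) (a1 + a3 + a5) c1 (c1 + c3) (c1 + c3 + c5) = 0"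
    by (rule equiv3) (use assms in auto)
  finally show ?thesis unfolding w neg_equal_0_iff_equal .
qed

lemma case5:
  fixes a1 a3 a5 a7 a9 c1 c3 c5 c7 c9 :: complex
  assumes sa: "a1 + a3 + a5 + a7 + a9 = 0" and sc: "c1 + c3 + c5 + c7 + c9 = 0" and a5: "a5 = 0" and c5: "c5 = 0"
    and "a1 \<noteq> 0" "a3 \<noteq> 0" "a1 + a3 \<noteq> 0" "c1 \<noteq> 0" "c3 \<noteq> 0" "c1 + c3 \<noteq> 0"
  shows "(\<exists>p r s. CC p r s a1 a3 a5 a7 c1 c3 c5 c7) \<longleftrightarrow> a7 * c9 * a1 * c3 - c7 * a9 * c1 * a3 = 0"
proof -
  have a9: "a9 = - (a1 + a3 + a7)" and c9: "c9 = - (c1 + c3 + c7)" using assms by (simp_all add: algebra_simps eq_neg_iff_add_eq_0)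
  have w: "W a1 (a1 + a3) (a1 + a3 + a7) c1 (c1 + c3) (c1 + c3 + c7) = a7 * c9 * a1 * c3 - c7 * a9 * c1 * a3"
    unfolding a9 c9 W_def by (simp add: algebra_simps)
  have "(\<exists>p r s. CC p r s a1 a3 a5 a7 c1 c3 c5 c7) \<longleftrightarrow> (\<exists>p r s. p * s \<noteq> 0 \<and> Cnd p r s a1 c1 \<and> Cnd p r s (a1 + a3) (c1 + c3) \<and>
   Cnd p r s (a1 + a3 + a7) (c1 + c3 + c7))" unfolding a5 c5 by simp
  also have "\<dots> \<longleftrightarrow> W a1 (a1 + a3) (a1 + a3 + a7) c1 (c1 + c3) (c1 + c3 + c7) = 0"
    by (rule equiv3) (use assms in auto)
  finally show ?thesis unfolding w .
qed

lemma case3: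
  fixes a1 a3 a5 a7 a9 c1 c3 c5 c7 c9 :: complex
  assumes sa: "a1 + a3 + a5 + a7 + a9 = 0" and sc: "c1 + c3 + c5 + c7 + c9 = 0" and a3: "a3 = 0" and c3: "c3 = 0"
    and "a1 \<noteq> 0" "a5 \<noteq> 0" "a1 + a5 \<noteq> 0" "c1 \<noteq> 0" "c5 \<noteq> 0" "c1 + c5 \<noteq> 0"
  shows "(\<exists>p r s. CC p r s a1 a3 a5 a7 c1 c3 c5 c7) \<longleftrightarrow> a5 * c7 * a9 * c1 - c5 * a7 * c9 * a1 = 0"
proof -
  have a9: "a9 = - (a1 + a5 + a7)" and c9: "c9 = - (c1 + c5 + c7)" using assms by (simp_all add: algebra_simps eq_neg_iff_add_eq_0)
  have w: "W a1 (a1 + a5) (a1 + a5 + a7) c1 (c1 + c5) (c1 + c5 + c7) = - (a5 * c7 * a9 * c1 - c5 * a7 * c9 * a1)"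
    unfolding a9 c9 W_def by (simp add: algebra_simps)
  have "(\<exists>p r s. CC p r s a1 a3 a5 a7 c1 c3 c5 c7) \<longleftrightarrow> (\<exists>p r s. p * s \<noteq> 0 \<and> Cnd p r s a1 c1 \<and> Cnd p r s (a1 + a5) (c1 + c5) \<and>
   Cnd p r s (a1 + a5 + a7) (c1 + c5 + c7))" unfolding a3 c3 by auto
  also have "\<dots> \<longleftrightarrow> W a1 (a1 + a5) (a1 + a5 + a7) c1 (c1 + c5) (c1 + c5 + c7) = 0"
    by (rule equiv3) (use assms in auto)
  finally show ?thesis unfolding w neg_equal_0_iff_equal .
qed

lemma case1:
  fixes a1 a3 a5 a7 a9 c1 c3 c5 c7 c9 :: complex
  assumes sa: "a1 + a3 + a5 + a7 + a9 = 0" and sc: "c1 + c3 + c5 + c7 + c9 = 0" and a1: "a1 = 0" and c1: "c1 = 0"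
    and "a3 \<noteq> 0" "a5 \<noteq> 0" "a3 + a5 \<noteq> 0" "c3 \<noteq> 0" "c5 \<noteq> 0" "c3 + c5 \<noteq> 0"
  shows "(\<exists>p r s. CC p r s a1 a3 a5 a7 c1 c3 c5 c7) \<longleftrightarrow> a3 * c5 * a7 * c9 - c3 * a5 * c7 * a9 = 0"
proof -
  have a9: "a9 = - (a3 + a5 + a7)" and c9: "c9 = - (c3 + c5 + c7)" using assms by (simp_all add: algebra_simps eq_neg_iff_add_eq_0)
  have w: "W a3 (a3 + a5) (a3 + a5 + a7) c3 (c3 + c5) (c3 + c5 + c7) = a3 * c5 * a7 * c9 - c3 * a5 * c7 * a9"
    unfolding a9 c9 W_def by (simp add: algebra_simps)
  have "(\<exists>p r s. CC p r s a1 a3 a5 a7 c1 c3 c5 c7) \<longleftrightarrow> (\<exists>p r s. p * s \<noteq> 0 \<and> Cnd p r s a3 c3 \<and> Cnd p r s (a3 + a5) (c3 + c5) \<and>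
   Cnd p r s (a3 + a5 + a7) (c3 + c5 + c7))" unfolding a1 c1 by (simp add: add.assoc)
  also have "\<dots> \<longleftrightarrow> W a3 (a3 + a5) (a3 + a5 + a7) c3 (c3 + c5) (c3 + c5 + c7) = 0"
    by (rule equiv3) (use assms in auto)
  finally show ?thesis unfolding w .
qed


theorem theorem2p5:
  fixes b c :: "nat \<Rightarrow> complex fps" and j :: nat
  assumes "(\<Sum>i\<in>{1..10}. b i) = 0" and "(\<Sum>i\<in>{1..10}. c i) = 0"
    and "j \<in> {1, 3, 5, 7, 9}"
    and "fps_X dvd Bsum b j" and "fps_X dvd Bsum c j"
    and "\<forall>l\<in>{1..4}. \<not> fps_X dvd Bsum b (oidx j l) \<and> \<not> fps_X dvd Bsum c (oidx j l)"
    and "\<forall>l\<in>{1..4}. \<not> fps_X dvd (Bsum b (oidx j l) + Bsum b (oidx j (l + 1))) \<and>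
                    \<not> fps_X dvd (Bsum c (oidx j l) + Bsum c (oidx j (l + 1)))"
  shows "M_iso b c \<longleftrightarrow>
    fps_X dvd (Bsum b (oidx j 1) * Bsum c (oidx j 2) * Bsum b (oidx j 3) * Bsum c (oidx j 4)
             - Bsum c (oidx j 1) * Bsum b (oidx j 2) * Bsum c (oidx j 3) * Bsum b (oidx j 4))"
proof -
  define A where "A k = fps_nth (Bsum b k) 0" for k
  define C where "C k = fps_nth (Bsum c k) 0" for k
  have iso: "M_iso b c \<longleftrightarrow> (\<exists>p r s. CC p r s (A 1) (A 3) (A 5) (A 7) (C 1) (C 3) (C 5) (C 7))"
    unfolding iso_char[OF assms(1,2)] A_def C_def by simp
  have sa: "A 1 + A 3 + A 5 + A 7 + A 9 = 0"
    using arg_cong[OF assms(1), of "\<lambda>f. fps_nth f 0"] unfolding T10[symmetric] T_vals A_def by simp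
  have sc: "C 1 + C 3 + C 5 + C 7 + C 9 = 0"
    using arg_cong[OF assms(2), of "\<lambda>f. fps_nth f 0"] unfolding T10[symmetric] T_vals C_def by simp
  have Z: "A j = 0" "C j = 0" using assms(4,5) by (simp_all add: A_def C_def X_dvd_iff)
  have H6: "A (oidx j l) \<noteq> 0 \<and> C (oidx j l) \<noteq> 0" if "l \<in> {1..4}" for l
    using assms(6) that by (simp add: A_def C_def X_dvd_iff)
  have H7: "A (oidx j l) + A (oidx j (l+1)) \<noteq> 0 \<and> C (oidx j l) + C (oidx j (l+1)) \<noteq> 0" if "l \<in> {1..4}" for l
    using assms(7) that by (simp add: A_def C_def X_dvd_iff)
  have goal: "fps_X dvd (Bsum b (oidx j 1) * Bsum c (oidx j 2) * Bsum b (oidx j 3) * Bsum c (oidx j 4)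
             - Bsum c (oidx j 1) * Bsum b (oidx j 2) * Bsum c (oidx j 3) * Bsum b (oidx j 4)) \<longleftrightarrow>
       A (oidx j 1) * C (oidx j 2) * A (oidx j 3) * C (oidx j 4) - C (oidx j 1) * A (oidx j 2) * C (oidx j 3) * A (oidx j 4) = 0"
    by (simp add: X_dvd_iff A_def C_def)
  have o1: "oidx 1 1 = 3" "oidx 1 2 = 5" "oidx 1 3 = 7" "oidx 1 4 = 9" "oidx 1 5 = 3"
    and o3: "oidx 3 1 = 5" "oidx 3 2 = 7" "oidx 3 3 = 9" "oidx 3 4 = 1" "oidx 3 5 = 5"
    and o5: "oidx 5 1 = 7" "oidx 5 2 = 9" "oidx 5 3 = 1" "oidx 5 4 = 3" "oidx 5 5 = 7"
    and o7: "oidx 7 1 = 9" "oidx 7 2 = 1" "oidx 7 3 = 3" "oidx 7 4 = 5" "oidx 7 5 = 9"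
    and o9: "oidx 9 1 = 1" "oidx 9 2 = 3" "oidx 9 3 = 5" "oidx 9 4 = 7" "oidx 9 5 = 1"
    by (simp_all add: oidx_def)
  have n2: "(1::nat) + 1 = 2" and n3: "(2::nat) + 1 = 3" and n4: "(3::nat) + 1 = 4" and n5: "(4::nat) + 1 = 5" by simp_all
  have in4: "(1::nat) \<in> {1..4}" "(2::nat) \<in> {1..4}" "(3::nat) \<in> {1..4}" "(4::nat) \<in> {1..4}" by auto
  note H6s = H6[OF in4(1)] H6[OF in4(2)] H6[OF in4(3)] H6[OF in4(4)]
  note H7s = H7[OF in4(1), unfolded n2] H7[OF in4(2), unfolded n3] H7[OF in4(3), unfolded n4] H7[OF in4(4), unfolded n5]
  from assms(3) consider "j = 1" | "j = 3" | "j = 5" | "j = 7" | "j = 9" by blast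
  then show ?thesis
  proof cases
    case 1
    have nz: "A 3 \<noteq> 0 \<and> A 5 \<noteq> 0 \<and> C 3 \<noteq> 0 \<and> C 5 \<noteq> 0"
      using H6s unfolding 1 o1 by blast
    have sm: "A 3 + A 5 \<noteq> 0 \<and> C 3 + C 5 \<noteq> 0"
      using H7s unfolding 1 o1 by blast
    have z: "A 1 = 0" "C 1 = 0" using Z unfolding 1 by auto
    have e: "(\<exists>p r s. CC p r s (A 1) (A 3) (A 5) (A 7) (C 1) (C 3) (C 5) (C 7)) \<longleftrightarrow> A 3 * C 5 * A 7 * C 9 - C 3 * A 5 * C 7 * A 9 = 0"
      by (rule case1[OF sa sc z]) (use nz sm in auto)
    show ?thesis unfolding iso goal unfolding 1 o1 by (rule e)
  next
    case 2
    have nz: "A 1 \<noteq> 0 \<and> A 5 \<noteq> 0 \<and> C 1 \<noteq> 0 \<and> C 5 \<noteq> 0"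
      using H6s unfolding 2 o3 by blast
    have sm: "A 1 + A 5 \<noteq> 0 \<and> C 1 + C 5 \<noteq> 0"
      using H7s unfolding 2 o3 by blast
    have z: "A 3 = 0" "C 3 = 0" using Z unfolding 2 by auto
    have e: "(\<exists>p r s. CC p r s (A 1) (A 3) (A 5) (A 7) (C 1) (C 3) (C 5) (C 7)) \<longleftrightarrow> A 5 * C 7 * A 9 * C 1 - C 5 * A 7 * C 9 * A 1 = 0"
      by (rule case3[OF sa sc z]) (use nz sm in auto)
    show ?thesis unfolding iso goal unfolding 2 o3 by (rule e)
  next
    case 3
    have nz: "A 1 \<noteq> 0 \<and> A 3 \<noteq> 0 \<and> C 1 \<noteq> 0 \<and> C 3 \<noteq> 0"
      using H6s unfolding 3 o5 by blast
    have sm: "A 1 + A 3 \<noteq> 0 \<and> C 1 + C 3 \<noteq> 0"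
      using H7s unfolding 3 o5 by blast
    have z: "A 5 = 0" "C 5 = 0" using Z unfolding 3 by auto
    have e: "(\<exists>p r s. CC p r s (A 1) (A 3) (A 5) (A 7) (C 1) (C 3) (C 5) (C 7)) \<longleftrightarrow> A 7 * C 9 * A 1 * C 3 - C 7 * A 9 * C 1 * A 3 = 0"
      by (rule case5[OF sa sc z]) (use nz sm in auto)
    show ?thesis unfolding iso goal unfolding 3 o5 by (rule e)
  next
    case 4
    have nz: "A 1 \<noteq> 0 \<and> A 3 \<noteq> 0 \<and> C 1 \<noteq> 0 \<and> C 3 \<noteq> 0"
      using H6s unfolding 4 o7 by blast
    have sm: "A 1 + A 3 \<noteq> 0 \<and> C 1 + C 3 \<noteq> 0"
      using H7s unfolding 4 o7 by blast
    have z: "A 7 = 0" "C 7 = 0" using Z unfolding 4 by auto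
    have e: "(\<exists>p r s. CC p r s (A 1) (A 3) (A 5) (A 7) (C 1) (C 3) (C 5) (C 7)) \<longleftrightarrow> A 9 * C 1 * A 3 * C 5 - C 9 * A 1 * C 3 * A 5 = 0"
      by (rule case7[OF sa sc z]) (use nz sm in auto)
    show ?thesis unfolding iso goal unfolding 4 o7 by (rule e)
  next
    case 5
    have nz: "A 1 \<noteq> 0 \<and> A 3 \<noteq> 0 \<and> C 1 \<noteq> 0 \<and> C 3 \<noteq> 0"
      using H6s unfolding 5 o9 by blast
    have sm: "A 1 + A 3 \<noteq> 0 \<and> C 1 + C 3 \<noteq> 0"
      using H7s unfolding 5 o9 by blast
    have z: "A 9 = 0" "C 9 = 0" using Z unfolding 5 by auto
    have e: "(\<exists>p r s. CC p r s (A 1) (A 3) (A 5) (A 7) (C 1) (C 3) (C 5) (C 7)) \<longleftrightarrow> A 1 * C 3 * A 5 * C 7 - C 1 * A 3 * C 5 * A 7 = 0"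
      by (rule case9[OF sa sc z]) (use nz sm in auto)
    show ?thesis unfolding iso goal unfolding 5 o9 by (rule e)
  qed
qed

end
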